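(* Let $p\ge1$, $\phi_1,\dots,\phi_p:\mathbb Z\to\mathbb C$, $v:\mathbb Z\to\mathbb C$ and integers $t>s$. Then $$\sum_{j=1}^{t-s}H(t,s+j)\,v_{s+j}=\det M,$$ where $M$ is the $(t-s)\times(t-s)$ matrix obtained from $\Phi_{t,s}$ by replacing its first column with $(v_{s+1},v_{s+2},\dots,v_t)^{T}$.
   Context: $\Gamma_t$ is the $p\times p$ companion matrix with first row $(\phi_1(t),\dots,\phi_p(t))$, entries $(i,i-1)$ equal to $1$ for $2\le i\le p$, other entries $0$. For $t>u$ the Green's function $H(t,u)$ is the $(1,1)$ entry of $\Gamma_t\Gamma_{t-1}\cdots\Gamma_{u+1}$, and $H(u,u)=1$. Convention: $\phi_l=0$ for $l>p$. For $t>s$, $\Phi_{t,s}$ is the $(t-s)\times(t-s)$ matrix with $(i,j)$ entry $-1$ if $j=i+1$, $\phi_{i-j+1}(s+i)$ if $1\le j\le i$, $0$ if $j>i+1$. *)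

theory Defs
  imports Complex_Main "Jordan_Normal_Form.Determinant"
begin

definition phic :: "nat \<Rightarrow> (nat \<Rightarrow> int \<Rightarrow> complex) \<Rightarrow> nat \<Rightarrow> int \<Rightarrow> complex" where
  "phic p phi l t = (if 1 \<le> l \<and> l \<le> p then phi l t else 0)"

definition Gamma :: "nat \<Rightarrow> (nat \<Rightarrow> int \<Rightarrow> complex) \<Rightarrow> int \<Rightarrow> complex mat" where
  "Gamma p phi t = mat p p (\<lambda>(i,j). if i = 0 then phic p phi (j+1) t
                                     else if i = j + 1 then 1 else 0)"

fun gprod :: "nat \<Rightarrow> (nat \<Rightarrow> int \<Rightarrow> complex) \<Rightarrow> int \<Rightarrow> nat \<Rightarrow> complex mat" where
  "gprod p phi t 0 = 1\<^sub>m p"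
| "gprod p phi t (Suc n) = Gamma p phi t * gprod p phi (t - 1) n"

text \<open>Green's function: H(u,u) = 1, and for t > u the (1,1) entry of Gamma_t ... Gamma_(u+1).
  (Values for t < u are not used.)\<close>
definition green :: "nat \<Rightarrow> (nat \<Rightarrow> int \<Rightarrow> complex) \<Rightarrow> int \<Rightarrow> int \<Rightarrow> complex" where
  "green p phi t u = (if t = u then 1
                      else if t > u then gprod p phi t (nat (t - u)) $$ (0,0) else 0)"

text \<open>Phi_{t,s} (0-indexed; paper entry (i+1,j+1)): -1 if j = i+1,
  phi_{i-j+1}(s+i+1) if j \<le> i, 0 otherwise.\<close>
definition PhiM :: "nat \<Rightarrow> (nat \<Rightarrow> int \<Rightarrow> complex) \<Rightarrow> int \<Rightarrow> int \<Rightarrow> complex mat" where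
  "PhiM p phi t s = mat (nat (t - s)) (nat (t - s))
     (\<lambda>(i,j). if j = i + 1 then -1
              else if j \<le> i then phic p phi (i - j + 1) (s + int i + 1) else 0)"

definition MM :: "nat \<Rightarrow> (nat \<Rightarrow> int \<Rightarrow> complex) \<Rightarrow> (int \<Rightarrow> complex) \<Rightarrow> int \<Rightarrow> int \<Rightarrow> complex mat" where
  "MM p phi v t s = mat (nat (t - s)) (nat (t - s))
     (\<lambda>(i,j). if j = 0 then v (s + int i + 1) else PhiM p phi t s $$ (i,j))"

end

theory Submission
  imports Defs
begin

lemma Gamma_carrier[simp]: "Gamma p phi t \<in> carrier_mat p p"
  unfolding Gamma_def by simp

lemma gprod_carrier[simp]: "gprod p phi t m \<in> carrier_mat p p"
proof (induction m arbitrary: t)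
  case 0 then show ?case by simp
next
  case (Suc m) then show ?case by (simp add: mult_carrier_mat[OF Gamma_carrier])
qed

lemma gprod_dims[simp]: "dim_row (gprod p phi t m) = p" "dim_col (gprod p phi t m) = p"
  using carrier_matD[OF gprod_carrier[of p phi t m]] by auto

lemma gprod_snoc: "gprod p phi t (Suc m) = gprod p phi t m * Gamma p phi (t - int m)"
proof (induction m arbitrary: t)
  case 0
  have "Gamma p phi t * 1\<^sub>m p = 1\<^sub>m p * Gamma p phi t"
    using right_mult_one_mat[of "Gamma p phi t" p p] left_mult_one_mat[of "Gamma p phi t" p p] by simp
  then show ?case by simp
next
  case (Suc m)
  have "gprod p phi t (Suc (Suc m)) = Gamma p phi t * gprod p phi (t - 1) (Suc m)" by simp
  also have "\<dots> = Gamma p phi t * (gprod p phi (t-1) m * Gamma p phi (t - 1 - int m))"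
    using Suc.IH[of "t-1"] by (simp only:)
  also have "\<dots> = (Gamma p phi t * gprod p phi (t-1) m) * Gamma p phi (t - 1 - int m)"
    by (rule assoc_mult_mat[symmetric, of _ p p _ p _ p]) auto
  also have "t - 1 - int m = t - int (Suc m)" by simp
  finally show ?case by simp
qed

lemma phic_big: "l > p \<Longrightarrow> phic p phi l x = 0"
  unfolding phic_def by simp

lemma gprod_row0:
  assumes "k < p"
  shows "gprod p phi t m $$ (0,k) =
    (\<Sum>j<m. gprod p phi t (m - Suc j) $$ (0,0) * phic p phi (k + Suc j) (t - int m + int (Suc j)))
    + (if k + m = 0 then 1 else 0)"
  using assms
proof (induction m arbitrary: k)
  case 0
  then show ?case by simp
next
  case (Suc m)
  let ?A = "gprod p phi t m"
  let ?a = "phic p phi (k+1) (t - int m)"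
  have p0: "0 < p" using Suc.prems by simp
  have "gprod p phi t (Suc m) $$ (0,k) = (\<Sum>i<p. ?A $$ (0,i) * Gamma p phi (t - int m) $$ (i,k))"
    using Suc.prems p0 unfolding gprod_snoc
    by (simp add: scalar_prod_def row_def col_def lessThan_atLeast0 Gamma_def)
  also have "\<dots> = (\<Sum>i<p. ?A $$ (0,i) * (if i = 0 then ?a else 0)
                          + ?A $$ (0,i) * (if i = k+1 then 1 else 0))"
    using Suc.prems by (intro sum.cong) (auto simp: Gamma_def)
  also have "\<dots> = (\<Sum>i<p. if i = 0 then ?A $$ (0,i) * ?a else 0)
                   + (\<Sum>i<p. if i = k+1 then ?A $$ (0,i) else 0)"
    unfolding sum.distrib[symmetric] by (intro sum.cong) auto
  also have "\<dots> = ?A $$ (0,0) * ?a + (if k + 1 < p then ?A $$ (0,k+1) else 0)"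
    using p0 by (simp add: sum.delta')
  also have "(if k + 1 < p then ?A $$ (0,k+1) else 0) =
     (\<Sum>j<m. gprod p phi t (m - Suc j) $$ (0,0) * phic p phi (k + 1 + Suc j) (t - int m + int (Suc j)))"
  proof (cases "k + 1 < p")
    case True
    then show ?thesis using Suc.IH[of "k+1"] by simp
  next
    case False
    then show ?thesis by (simp add: phic_big)
  qed
  also have "?A $$ (0,0) * ?a + (\<Sum>j<m. gprod p phi t (m - Suc j) $$ (0,0) * phic p phi (k + 1 + Suc j) (t - int m + int (Suc j)))
    = (\<Sum>j<Suc m. gprod p phi t (Suc m - Suc j) $$ (0,0) * phic p phi (k + Suc j) (t - int (Suc m) + int (Suc j)))"
    unfolding sum.lessThan_Suc_shift by (simp add: algebra_simps)
  finally show ?case by simp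
qed

lemma green_gprod: "1 \<le> p \<Longrightarrow> green p phi t (t - int i) = gprod p phi t i $$ (0,0)"
proof -
  assume "1 \<le> p"
  have e: "nat (t - (t - int i)) = i" by simp
  show ?thesis
  proof (cases i)
    case 0 then show ?thesis using \<open>1 \<le> p\<close> unfolding green_def by simp
  next
    case (Suc n)
    then show ?thesis unfolding green_def using e by (simp del: gprod.simps)
  qed
qed

lemma green_back:
  assumes "1 \<le> p" "m \<ge> 1"
  shows "green p phi t (t - int m) =
    (\<Sum>j<m. green p phi t (t - int m + int (Suc j)) * phic p phi (Suc j) (t - int m + int (Suc j)))"
proof -
  have "green p phi t (t - int m) = gprod p phi t m $$ (0,0)" using assms green_gprod by blast
  also have "\<dots> = (\<Sum>j<m. gprod p phi t (m - Suc j) $$ (0,0) * phic p phi (Suc j) (t - int m + int (Suc j)))"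
    using gprod_row0[of 0 p phi t m] assms by simp
    also have "\<dots> = (\<Sum>j<m. green p phi t (t - int m + int (Suc j)) * phic p phi (Suc j) (t - int m + int (Suc j)))"
  proof (intro sum.cong refl)
    fix j assume "j \<in> {..<m}"
    then have e: "t - int m + int (Suc j) = t - int (m - Suc j)" by auto
    have "green p phi t (t - int m + int (Suc j)) = gprod p phi t (m - Suc j) $$ (0,0)"
      unfolding e by (rule green_gprod[OF assms(1)])
    then show "gprod p phi t (m - Suc j) $$ (0,0) * phic p phi (Suc j) (t - int m + int (Suc j)) =
      green p phi t (t - int m + int (Suc j)) * phic p phi (Suc j) (t - int m + int (Suc j))"
      by simp
  qed
  finally show ?thesis .
qed

lemma MM_carrier: "MM p phi v t (t - int n) \<in> carrier_mat n n"
  unfolding MM_def by simp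

lemma MM_idx: "i < n \<Longrightarrow> j < n \<Longrightarrow> MM p phi v t (t - int n) $$ (i,j) =
  (if j = 0 then v (t - int n + int i + 1) else if j = i + 1 then -1
   else if j \<le> i then phic p phi (i - j + 1) (t - int n + int i + 1) else 0)"
  unfolding MM_def PhiM_def by simp

lemma del00: "mat_delete (MM p phi v t (t - int (Suc m))) 0 0 = PhiM p phi t (t - int m)"
  unfolding mat_delete_def MM_def PhiM_def by (rule eq_matI) (auto simp: algebra_simps)

lemma del01: "m \<ge> 1 \<Longrightarrow> mat_delete (MM p phi v t (t - int (Suc m))) 0 1 = MM p phi v t (t - int m)"
  unfolding mat_delete_def MM_def PhiM_def by (rule eq_matI) (auto simp: algebra_simps)

lemma PhiM_MM: "PhiM p phi t u = MM p phi (\<lambda>x. phic p phi (nat (x - u)) x) t u"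
proof -
  have e: "\<And>i::nat. nat (int i + 1) = Suc i" by simp
  show ?thesis unfolding MM_def PhiM_def by (rule eq_matI) (auto simp: e)
qed

lemma MM_row0:
  assumes "n \<ge> 1"
  shows "det (MM p phi v t (t - int n)) =
    (\<Sum>j<n. MM p phi v t (t - int n) $$ (0,j) * cofactor (MM p phi v t (t - int n)) 0 j)"
  using laplace_expansion_row[OF MM_carrier, of 0 n] assms by simp

lemma main:
  assumes "1 \<le> p"
  shows "n \<ge> 1 \<Longrightarrow> (\<Sum>j<n. green p phi t (t - int n + int (Suc j)) * v (t - int n + int (Suc j)))
     = det (MM p phi v t (t - int n))"
proof (induction n arbitrary: v rule: less_induct)
  case (less n)
  then obtain m where n: "n = Suc m" by (cases n) auto
  show ?case
  proof (cases m)
    case 0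
    have c: "mat_delete (MM p phi v t (t - 1)) 0 0 \<in> carrier_mat 0 0"
      using mat_delete_carrier[OF MM_carrier[of p phi v t 1]] by simp
    have "det (MM p phi v t (t - 1)) = MM p phi v t (t - 1) $$ (0,0) * cofactor (MM p phi v t (t - 1)) 0 0"
      using MM_row0[of 1 p phi v t] by simp
    also have "\<dots> = v t" using MM_idx[of 0 1 0 p phi v t] c by (simp add: cofactor_def)
    finally show ?thesis using n 0 by (simp add: green_def)
  next
    case (Suc m')
    let ?M = "MM p phi v t (t - int n)"
    let ?w = "\<lambda>x. phic p phi (nat (x - (t - int m))) x"
    have m1: "m \<ge> 1" using Suc by simp
    have "det ?M = (\<Sum>j<n. ?M $$ (0,j) * cofactor ?M 0 j)"
      using MM_row0[of n] n by simp
    also have "\<dots> = ?M $$ (0,0) * cofactor ?M 0 0 + ?M $$ (0,1) * cofactor ?M 0 1"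
    proof -
      have "(\<Sum>j<m'. ?M $$ (0,Suc (Suc j)) * cofactor ?M 0 (Suc (Suc j))) = 0"
      proof (intro sum.neutral ballI)
        fix x assume "x \<in> {..<m'}"
        then have "?M $$ (0, Suc (Suc x)) = 0" using MM_idx[of 0 n "Suc (Suc x)" p phi v t] n Suc by simp
        then show "?M $$ (0,Suc (Suc x)) * cofactor ?M 0 (Suc (Suc x)) = 0" by simp
      qed
      then show ?thesis unfolding n Suc sum.lessThan_Suc_shift by simp
    qed
    also have "\<dots> = v (t - int m) * det (PhiM p phi t (t - int m)) + det (MM p phi v t (t - int m))"
    proof -
      have e0: "?M $$ (0,0) = v (t - int m)" using MM_idx[of 0 n 0 p phi v t] n by simp
      have e1: "?M $$ (0,1) = -1" using MM_idx[of 0 n 1 p phi v t] n Suc by simp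
      show ?thesis using e0 e1 unfolding cofactor_def n del00 del01[OF m1] by simp
    qed
    also have "det (PhiM p phi t (t - int m)) = green p phi t (t - int m)"
    proof -
      have "det (PhiM p phi t (t - int m)) = det (MM p phi ?w t (t - int m))"
        by (simp only: PhiM_MM)
      also have "\<dots> = (\<Sum>j<m. green p phi t (t - int m + int (Suc j)) * ?w (t - int m + int (Suc j)))"
        using less.IH[of m ?w] n m1 by simp
      also have "\<dots> = (\<Sum>j<m. green p phi t (t - int m + int (Suc j)) * phic p phi (Suc j) (t - int m + int (Suc j)))"
      proof (intro sum.cong refl)
        fix x :: nat
        have "nat (t - int m + int (Suc x) - (t - int m)) = Suc x" by simp
        then show "green p phi t (t - int m + int (Suc x)) * ?w (t - int m + int (Suc x)) =
          green p phi t (t - int m + int (Suc x)) * phic p phi (Suc x) (t - int m + int (Suc x))"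
          by (simp only:)
      qed
      finally show ?thesis using green_back[OF assms m1] by simp
    qed
    also have "det (MM p phi v t (t - int m)) = (\<Sum>j<m. green p phi t (t - int m + int (Suc j)) * v (t - int m + int (Suc j)))"
      using less.IH[OF _ m1] n by simp
    finally show ?thesis unfolding n sum.lessThan_Suc_shift by (simp add: algebra_simps)
  qed
qed

theorem proposition5:
  fixes p :: nat and phi :: "nat \<Rightarrow> int \<Rightarrow> complex" and v :: "int \<Rightarrow> complex"
    and t s :: int
  assumes "p \<ge> 1" and "t > s"
  shows "(\<Sum>j = 1..nat (t - s). green p phi t (s + int j) * v (s + int j)) = det (MM p phi v t s)"
proof -
  define n where "n = nat (t - s)"
  have sn: "s = t - int n" and n1: "n \<ge> 1" using assms(2) unfolding n_def by auto
  have "(\<Sum>j = 1..n. green p phi t (s + int j) * v (s + int j))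
      = (\<Sum>j<n. green p phi t (s + int (Suc j)) * v (s + int (Suc j)))"
    using sum.atLeast1_atMost_eq[of "\<lambda>j. green p phi t (s + int j) * v (s + int j)" n] by simp
  also have "\<dots> = det (MM p phi v t s)"
    using main[OF assms(1) n1, of phi t v] unfolding sn[symmetric] .
  finally show ?thesis unfolding n_def .
qed

end
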